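(* Suppose one of the following two settings holds. (A) $H\subset\mathbb R^n$ is a bounded, open, mildly regular set, $m\ge1$, $\mathcal B$ is a finite index set, for each $\beta\in\mathcal B$ $b_\beta\in C^m(\bar H)$ with $b_\beta(x)>0$ for all $x\in\bar H$, and $\theta_\beta:H\to H$ is a $C^m$ map whose components lie in $C^m(\bar H)$; and for some norm $\|\cdot\|$ on $\mathbb R^n$ there exist an integer $\mu\ge1$ and $\kappa<1$ such that $\|\theta_\omega(x)-\theta_\omega(y)\|\le\kappa\|x-y\|$ for all $\omega\in\mathcal B_\mu$ and $x,y\in H$. Let $\Lambda:C^m(\bar H)\to C^m(\bar H)$ be $(\Lambda f)(x)=\sum_{\beta\in\mathcal B}b_\beta(x)f(\theta_\beta(x))$; it has a unique (up to positive multiples) strictly positive eigenvector $v$, whose eigenvalue is $r(\Lambda)$. (B) $H\subset\mathbb R^n$ is bounded open with metric from a norm, $\mathcal B$ is countably infinite, $\theta_\beta:\bar H\to\bar H$ and $b_\beta:\bar H\to(0,\infty)$ are continuous, the families $\{\theta_\beta\}$, $\{b_\beta\}$, $\{\log b_\beta\}$ are uniformly Lipschitz, $\sum_\beta b_\beta(x)<\infty$ for all $x$ with continuous sum, and $\mathrm{Lip}(\theta_\omega)\le\kappa<1$ for all $\omega\in\mathcal B_\mu$ for some $\mu\ge1$. Let $\Lambda:C(\bar H)\to C(\bar H)$ be given by the same formula; it has a unique (up to positive multiples) strictly positive eigenvector $v$, with eigenvalue $r(\Lambda)$. Assume that $\pi:\bar H\to\bar H$ is a $C^m$ map, $m\ge1$,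 with $\pi(\pi(x))=x$ for all $x\in\bar H$, and that there is a one-to-one map $\beta\mapsto\bar\beta$ of $\mathcal B$ onto $\mathcal B$ such that $\pi(\theta_{\bar\beta}(x))=\theta_\beta(\pi(x))$ and $b_\beta(\pi(x))=b_{\bar\beta}(x)$ for all $\beta\in\mathcal B$ and all $x\in\bar H$. Then $v(\pi(x))=v(x)$ for all $x\in\bar H$.
   Context: $H$ is mildly regular if there exist $\eta>0$ and $M\ge1$ such that whenever $x,y\in H$ and $\|x-y\|<\eta$ there is a Lipschitz map $\psi:[0,1]\to H$ with $\psi(0)=x$, $\psi(1)=y$ and $\int_0^1\|\psi'(t)\|\,dt\le M\|x-y\|$. $C^m(\bar H)$ is the Banach space of real $C^m$ functions on $H$ all of whose partial derivatives of order $\le m$ extend continuously to $\bar H$. $\mathcal B_\mu=\{(j_1,\ldots,j_\mu):j_k\in\mathcal B\}$ and $\theta_\omega=\theta_{j_\mu}\circ\cdots\circ\theta_{j_1}$. Uniformly Lipschitz means one Lipschitz constant for the whole family. $r(\cdot)$ is the spectral radius. *)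

theory Defs
  imports "HOL-Analysis.Analysis"
begin

fun pd :: "'n::finite list \<Rightarrow> (real^'n \<Rightarrow> real) \<Rightarrow> (real^'n \<Rightarrow> real)" where
  "pd [] f = f"
| "pd (i # is) f = (\<lambda>x. frechet_derivative (pd is f) (at x) (axis i 1))"

(* C^m(closure H): C^m on the open set H, all partial derivatives of order \<le> m
   extend continuously to closure H; the function itself is considered on closure H *)
definition Cm :: "nat \<Rightarrow> (real^'n::finite) set \<Rightarrow> (real^'n \<Rightarrow> real) set" where
  "Cm m H = {f. continuous_on (closure H) f \<and>
     (\<forall>is. length is \<le> m \<longrightarrow>
        (length is < m \<longrightarrow> (\<forall>x\<in>H. pd is f differentiable (at x))) \<and>
        (\<exists>F. continuous_on (closure H) F \<and> (\<forall>x\<in>H. F x = pd is f x)))}"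

definition C0 :: "(real^'n::finite) set \<Rightarrow> (real^'n \<Rightarrow> real) set" where
  "C0 H = {f. continuous_on (closure H) f}"

definition is_norm :: "(real^'n::finite \<Rightarrow> real) \<Rightarrow> bool" where
  "is_norm N \<longleftrightarrow> (\<forall>x. N x \<ge> 0) \<and> (\<forall>x. N x = 0 \<longleftrightarrow> x = 0) \<and>
     (\<forall>c x. N (c *\<^sub>R x) = \<bar>c\<bar> * N x) \<and> (\<forall>x y. N (x + y) \<le> N x + N y)"

definition mildly_regular :: "(real^'n::finite) set \<Rightarrow> bool" where
  "mildly_regular H \<longleftrightarrow> (\<exists>\<eta>>0. \<exists>M\<ge>1. \<forall>x\<in>H. \<forall>y\<in>H. norm (x - y) < \<eta> \<longrightarrow>
     (\<exists>\<psi> L D N. L-lipschitz_on {0..1::real} \<psi> \<and> \<psi> ` {0..1} \<subseteq> H \<and> \<psi> 0 = x \<and> \<psi> 1 = y \<and>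
        negligible N \<and>
        (\<forall>t\<in>{0..1} - N. (\<psi> has_vector_derivative D t) (at t within {0..1})) \<and>
        (\<lambda>t. norm (D t)) integrable_on {0..1} \<and>
        integral {0..1} (\<lambda>t. norm (D t)) \<le> M * norm (x - y)))"

(* theta_omega = theta_{j_mu} o ... o theta_{j_1} for omega = [j_1,...,j_mu] *)
fun theta_word :: "('b \<Rightarrow> 'a \<Rightarrow> 'a) \<Rightarrow> 'b list \<Rightarrow> 'a \<Rightarrow> 'a" where
  "theta_word \<theta> [] = id"
| "theta_word \<theta> (j # js) = theta_word \<theta> js \<circ> \<theta> j"

definition words :: "'b set \<Rightarrow> nat \<Rightarrow> 'b list set" where
  "words B \<mu> = {\<omega>. length \<omega> = \<mu> \<and> set \<omega> \<subseteq> B}"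

definition Lam :: "'b set \<Rightarrow> ('b \<Rightarrow> 'a \<Rightarrow> real) \<Rightarrow> ('b \<Rightarrow> 'a \<Rightarrow> 'a) \<Rightarrow> ('a \<Rightarrow> real) \<Rightarrow> 'a \<Rightarrow> real" where
  "Lam B b \<theta> f x = (\<Sum>\<^sub>\<infinity>\<beta>\<in>B. b \<beta> x * f (\<theta> \<beta> x))"

definition settingA :: "nat \<Rightarrow> (real^'n::finite) set \<Rightarrow> 'b set \<Rightarrow> ('b \<Rightarrow> real^'n \<Rightarrow> real)
    \<Rightarrow> ('b \<Rightarrow> real^'n \<Rightarrow> real^'n) \<Rightarrow> bool" where
  "settingA m H B b \<theta> \<longleftrightarrow> bounded H \<and> open H \<and> mildly_regular H \<and> m \<ge> 1 \<and> finite B \<and>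
     (\<forall>\<beta>\<in>B. b \<beta> \<in> Cm m H \<and> (\<forall>x\<in>closure H. b \<beta> x > 0) \<and>
        \<theta> \<beta> ` H \<subseteq> H \<and> (\<forall>i. (\<lambda>x. \<theta> \<beta> x $ i) \<in> Cm m H)) \<and>
     (\<exists>N \<mu> \<kappa>. is_norm N \<and> \<mu> \<ge> 1 \<and> \<kappa> < 1 \<and>
        (\<forall>\<omega>\<in>words B \<mu>. \<forall>x\<in>H. \<forall>y\<in>H.
           N (theta_word \<theta> \<omega> x - theta_word \<theta> \<omega> y) \<le> \<kappa> * N (x - y)))"

definition settingB :: "(real^'n::finite) set \<Rightarrow> 'b set \<Rightarrow> ('b \<Rightarrow> real^'n \<Rightarrow> real)
    \<Rightarrow> ('b \<Rightarrow> real^'n \<Rightarrow> real^'n) \<Rightarrow> bool" where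
  "settingB H B b \<theta> \<longleftrightarrow> bounded H \<and> open H \<and> infinite B \<and> countable B \<and>
     (\<forall>\<beta>\<in>B. continuous_on (closure H) (\<theta> \<beta>) \<and> \<theta> \<beta> ` closure H \<subseteq> closure H \<and>
        continuous_on (closure H) (b \<beta>) \<and> (\<forall>x\<in>closure H. b \<beta> x > 0)) \<and>
     (\<forall>x\<in>closure H. (\<lambda>\<beta>. b \<beta> x) summable_on B) \<and>
     continuous_on (closure H) (\<lambda>x. \<Sum>\<^sub>\<infinity>\<beta>\<in>B. b \<beta> x) \<and>
     (\<exists>N. is_norm N \<and>
        (\<exists>L. \<forall>\<beta>\<in>B. \<forall>x\<in>closure H. \<forall>y\<in>closure H.
            N (\<theta> \<beta> x - \<theta> \<beta> y) \<le> L * N (x - y) \<and>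
            \<bar>b \<beta> x - b \<beta> y\<bar> \<le> L * N (x - y) \<and>
            \<bar>ln (b \<beta> x) - ln (b \<beta> y)\<bar> \<le> L * N (x - y)) \<and>
        (\<exists>\<mu> \<kappa>. \<mu> \<ge> 1 \<and> \<kappa> < 1 \<and>
           (\<forall>\<omega>\<in>words B \<mu>. \<forall>x\<in>closure H. \<forall>y\<in>closure H.
              N (theta_word \<theta> \<omega> x - theta_word \<theta> \<omega> y) \<le> \<kappa> * N (x - y))))"

definition pos_eigvec :: "(real^'n::finite) set \<Rightarrow> (real^'n \<Rightarrow> real) set \<Rightarrow> 'b set
    \<Rightarrow> ('b \<Rightarrow> real^'n \<Rightarrow> real) \<Rightarrow> ('b \<Rightarrow> real^'n \<Rightarrow> real^'n) \<Rightarrow> (real^'n \<Rightarrow> real) \<Rightarrow> bool" where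
  "pos_eigvec H X B b \<theta> w \<longleftrightarrow> w \<in> X \<and> (\<forall>x\<in>closure H. w x > 0) \<and>
     (\<exists>ev. \<forall>x\<in>closure H. Lam B b \<theta> w x = ev * w x)"

definition unique_pos_eigvec :: "(real^'n::finite) set \<Rightarrow> (real^'n \<Rightarrow> real) set \<Rightarrow> 'b set
    \<Rightarrow> ('b \<Rightarrow> real^'n \<Rightarrow> real) \<Rightarrow> ('b \<Rightarrow> real^'n \<Rightarrow> real^'n) \<Rightarrow> (real^'n \<Rightarrow> real) \<Rightarrow> bool" where
  "unique_pos_eigvec H X B b \<theta> v \<longleftrightarrow> pos_eigvec H X B b \<theta> v \<and>
     (\<forall>w. pos_eigvec H X B b \<theta> w \<longrightarrow> (\<exists>c>0. \<forall>x\<in>closure H. w x = c * v x))"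

end

theory Submission
  imports Defs
begin



lemma isn_0: "is_norm N \<Longrightarrow> N 0 = 0" unfolding is_norm_def by auto
lemma isn_minus: "is_norm N \<Longrightarrow> N (- x) = N x"
  unfolding is_norm_def by (metis abs_minus_cancel abs_one mult_1 scaleR_minus1_left)
lemma isn_commute: "is_norm N \<Longrightarrow> N (x - y) = N (y - x)"
  by (metis isn_minus minus_diff_eq)
lemma isn_tri: "is_norm N \<Longrightarrow> N (x + y) \<le> N x + N y" unfolding is_norm_def by auto
lemma isn_nn: "is_norm N \<Longrightarrow> N x \<ge> 0" unfolding is_norm_def by auto

lemma isn_sum: "is_norm N \<Longrightarrow> N (sum f A) \<le> (\<Sum>i\<in>A. N (f i))"
proof (induction A rule: infinite_finite_induct)
  case (infinite A) then show ?case by (simp add: isn_0)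
next
  case empty then show ?case by (simp add: isn_0)
next
  case (insert x F)
  then show ?case using isn_tri[OF insert(4), of "f x" "sum f F"] by simp
qed

lemma vec_axis_expand: "(x::real^'n::finite) = (\<Sum>i\<in>UNIV. x$i *\<^sub>R axis i 1)"
  by (simp add: vec_eq_iff sum_component axis_def if_distrib cong: if_cong)

lemma isn_upper: fixes N :: "real^'n::finite \<Rightarrow> real"
  assumes "is_norm N" shows "N x \<le> (\<Sum>i\<in>UNIV. N (axis i 1)) * norm x"
proof -
  have "N x = N (\<Sum>i\<in>UNIV. x$i *\<^sub>R axis i 1)" by (subst vec_axis_expand[of x]) simp
  also have "\<dots> \<le> (\<Sum>i\<in>UNIV. N (x$i *\<^sub>R axis i 1))" by (rule isn_sum[OF assms])
  also have "\<dots> = (\<Sum>i\<in>UNIV. \<bar>x$i\<bar> * N (axis i 1))" using assms unfolding is_norm_def by simp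
  also have "\<dots> \<le> (\<Sum>i\<in>UNIV. norm x * N (axis i 1))"
    by (rule sum_mono) (simp add: component_le_norm_cart isn_nn[OF assms] mult_right_mono)
  finally show ?thesis by (simp add: sum_distrib_left mult.commute)
qed

lemma isn_cont: fixes N :: "real^'n::finite \<Rightarrow> real"
  assumes "is_norm N" shows "continuous_on UNIV N"
proof -
  define C where "C = (\<Sum>i\<in>UNIV. N (axis i 1)) + 1"
  have C: "C > 0" unfolding C_def using isn_nn[OF assms] by (simp add: add_nonneg_pos sum_nonneg)
  have "\<bar>N x - N y\<bar> \<le> C * norm (x - y)" for x y
  proof -
    have "N x \<le> N (x - y) + N y" using isn_tri[OF assms, of "x-y" y] by simp
    moreover have "N y \<le> N (x - y) + N x" using isn_tri[OF assms, of "y-x" x] isn_commute[OF assms, of x y] by simp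
    moreover have "N (x - y) \<le> C * norm (x - y)" using isn_upper[OF assms, of "x-y"] unfolding C_def
      by (simp add: distrib_right)  (smt (verit) norm_ge_zero)
    ultimately show ?thesis by linarith
  qed
  then have "C-lipschitz_on UNIV N" using C by (simp add: lipschitz_on_def dist_norm dist_real_def)
  then show ?thesis using lipschitz_on_continuous_on by blast
qed

lemma isn_lower: fixes N :: "real^'n::finite \<Rightarrow> real"
  assumes "is_norm N" shows "\<exists>c>0. \<forall>x. norm x \<le> c * N x"
proof -
  have "compact (sphere (0::real^'n) 1)" "sphere (0::real^'n) 1 \<noteq> {}" by auto
  moreover have "continuous_on (sphere 0 1) N" using isn_cont[OF assms] continuous_on_subset by blast
  ultimately obtain z where z: "z \<in> sphere 0 1" "\<forall>y\<in>sphere 0 1. N z \<le> N y"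
    using continuous_attains_inf by blast
  have zp: "N z > 0" using z assms unfolding is_norm_def
    by (metis less_eq_real_def norm_zero mem_sphere_0 zero_neq_one)
  show ?thesis
  proof (intro exI[of _ "1 / N z"] conjI allI)
    fix x :: "real^'n"
    show "norm x \<le> 1 / N z * N x"
    proof (cases "x = 0")
      case True then show ?thesis by (simp add: isn_0[OF assms])
    next
      case False
      have "N z \<le> N ((1 / norm x) *\<^sub>R x)" using z(2) False by simp
      also have "\<dots> = N x / norm x" using assms False unfolding is_norm_def by simp
      finally show ?thesis using zp False by (simp add: field_simps)
    qed
  qed (simp add: zp)
qed




fun bw :: "('b \<Rightarrow> 'a \<Rightarrow> real) \<Rightarrow> ('b \<Rightarrow> 'a \<Rightarrow> 'a) \<Rightarrow> 'b list \<Rightarrow> 'a \<Rightarrow> real" where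
  "bw b \<theta> [] x = 1"
| "bw b \<theta> (j # js) x = b j x * bw b \<theta> js (\<theta> j x)"

lemma words_0: "words B 0 = {[]}" unfolding words_def by auto
lemma words_Suc: "words B (Suc k) = (\<lambda>(j,w). j # w) ` (B \<times> words B k)"
proof (rule set_eqI)
  fix xs show "xs \<in> words B (Suc k) \<longleftrightarrow> xs \<in> (\<lambda>(j,w). j # w) ` (B \<times> words B k)"
  proof (cases xs)
    case Nil then show ?thesis unfolding words_def by auto
  next
    case (Cons a ys) then show ?thesis unfolding words_def by (auto simp: image_iff)
  qed
qed
lemma finite_words: "finite B \<Longrightarrow> finite (words B k)"
proof -
  assume "finite B"
  moreover have "words B k = {xs. set xs \<subseteq> B \<and> length xs = k}" unfolding words_def by auto
  ultimately show ?thesis using finite_lists_length_eq by simp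
qed

lemma theta_word_append: "theta_word \<theta> (xs @ ys) = theta_word \<theta> ys \<circ> theta_word \<theta> xs"
  by (induction xs) auto

lemma theta_word_K: "\<forall>\<beta>\<in>B. \<theta> \<beta> ` K \<subseteq> K \<Longrightarrow> set \<omega> \<subseteq> B \<Longrightarrow> x \<in> K \<Longrightarrow> theta_word \<theta> \<omega> x \<in> K"
  by (induction \<omega> arbitrary: x) auto

lemma bw_pos: "\<forall>\<beta>\<in>B. \<theta> \<beta> ` K \<subseteq> K \<Longrightarrow> \<forall>\<beta>\<in>B. \<forall>x\<in>K. b \<beta> x > 0 \<Longrightarrow> set \<omega> \<subseteq> B \<Longrightarrow> x \<in> K \<Longrightarrow> bw b \<theta> \<omega> x > 0"
proof (induction \<omega> arbitrary: x)
  case (Cons a \<omega>)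
  then have "\<theta> a x \<in> K" by auto
  then show ?case using Cons by (simp add: mult_pos_pos)
qed simp

lemma iterate:
  assumes fin: "finite B" and K: "\<forall>\<beta>\<in>B. \<theta> \<beta> ` K \<subseteq> K"
    and eig: "\<forall>x\<in>K. (\<Sum>\<beta>\<in>B. b \<beta> x * f (\<theta> \<beta> x)) = lam * f x"
  shows "x \<in> K \<Longrightarrow> lam ^ k * f x = (\<Sum>\<omega>\<in>words B k. bw b \<theta> \<omega> x * f (theta_word \<theta> \<omega> x))"
proof (induction k arbitrary: x)
  case 0 then show ?case by (simp add: words_0)
next
  case (Suc k)
  have inj: "inj_on (\<lambda>(j,w). j # w) (B \<times> words B k)" by (auto simp: inj_on_def)
  have "(\<Sum>\<omega>\<in>words B (Suc k). bw b \<theta> \<omega> x * f (theta_word \<theta> \<omega> x))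
      = (\<Sum>(j,w)\<in>B \<times> words B k. b j x * (bw b \<theta> w (\<theta> j x) * f (theta_word \<theta> w (\<theta> j x))))"
    unfolding words_Suc by (subst sum.reindex[OF inj]) (simp add: case_prod_unfold mult.assoc)
  also have "\<dots> = (\<Sum>j\<in>B. b j x * (\<Sum>w\<in>words B k. bw b \<theta> w (\<theta> j x) * f (theta_word \<theta> w (\<theta> j x))))"
    by (simp add: sum.cartesian_product[symmetric] sum_distrib_left)
  also have "\<dots> = (\<Sum>j\<in>B. b j x * (lam ^ k * f (\<theta> j x)))"
    proof (intro sum.cong refl)
    fix j assume "j \<in> B"
    then have "\<theta> j x \<in> K" using K Suc.prems by auto
    then show "b j x * (\<Sum>w\<in>words B k. bw b \<theta> w (\<theta> j x) * f (theta_word \<theta> w (\<theta> j x))) = b j x * (lam ^ k * f (\<theta> j x))"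
      using Suc.IH by simp
  qed
  also have "\<dots> = lam ^ k * (lam * f x)" using eig Suc(2)
    by (simp add: sum_distrib_left[symmetric] mult.left_commute)
  finally show ?case by (metis mult.assoc power_Suc2)
qed

lemma contr_iter:
  assumes N: "is_norm N" and K: "\<forall>\<beta>\<in>B. \<theta> \<beta> ` K \<subseteq> K"
    and contr: "\<forall>\<omega>\<in>words B \<mu>. \<forall>x\<in>K. \<forall>y\<in>K. N (theta_word \<theta> \<omega> x - theta_word \<theta> \<omega> y) \<le> \<kappa> * N (x - y)"
  shows "\<omega> \<in> words B (k * \<mu>) \<Longrightarrow> x \<in> K \<Longrightarrow> y \<in> K \<Longrightarrow>
     N (theta_word \<theta> \<omega> x - theta_word \<theta> \<omega> y) \<le> (max \<kappa> 0) ^ k * N (x - y)"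
proof (induction k arbitrary: \<omega> x y)
  case 0 then show ?case by (simp add: words_def)
next
  case (Suc k)
  let ?w1 = "take \<mu> \<omega>" and ?w2 = "drop \<mu> \<omega>"
  have len: "length \<omega> = \<mu> + k * \<mu>" and sB: "set \<omega> \<subseteq> B"
    using Suc(2) unfolding words_def by auto
  have w1: "?w1 \<in> words B \<mu>" unfolding words_def
  proof
    show "length ?w1 = \<mu> \<and> set ?w1 \<subseteq> B" using len sB set_take_subset[of \<mu> \<omega>] by simp
  qed
  have w2: "?w2 \<in> words B (k * \<mu>)" unfolding words_def
  proof
    show "length ?w2 = k * \<mu> \<and> set ?w2 \<subseteq> B" using len sB set_drop_subset[of \<mu> \<omega>] by simp
  qed
  have eq: "theta_word \<theta> \<omega> = theta_word \<theta> ?w2 \<circ> theta_word \<theta> ?w1"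
    by (metis append_take_drop_id theta_word_append)
  have s1: "set ?w1 \<subseteq> B" using w1 unfolding words_def by blast
  have K1: "theta_word \<theta> ?w1 x \<in> K" "theta_word \<theta> ?w1 y \<in> K"
    using theta_word_K[OF K s1] Suc.prems(2,3) by blast+
  have "N (theta_word \<theta> \<omega> x - theta_word \<theta> \<omega> y)
     \<le> (max \<kappa> 0) ^ k * N (theta_word \<theta> ?w1 x - theta_word \<theta> ?w1 y)"
    using Suc.IH[OF w2 K1] unfolding eq comp_def .
  also have "\<dots> \<le> (max \<kappa> 0) ^ k * (max \<kappa> 0 * N (x - y))"
  proof (rule mult_left_mono)
    have "N (theta_word \<theta> ?w1 x - theta_word \<theta> ?w1 y) \<le> \<kappa> * N (x - y)" using contr w1 Suc.prems(2,3) by blast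
    also have "\<dots> \<le> max \<kappa> 0 * N (x - y)" by (rule mult_right_mono) (auto simp: isn_nn[OF N])
    finally show "N (theta_word \<theta> ?w1 x - theta_word \<theta> ?w1 y) \<le> max \<kappa> 0 * N (x - y)" .
  qed simp
  finally show ?case by (simp only: power_Suc2 mult.assoc)
qed




lemma core:
  fixes K :: "(real^'n::finite) set" and B :: "'b set"
    and b :: "'b \<Rightarrow> real^'n \<Rightarrow> real" and \<theta> :: "'b \<Rightarrow> real^'n \<Rightarrow> real^'n"
  assumes fin: "finite B" and Bne: "B \<noteq> {}" and cK: "compact K"
    and thK: "\<forall>\<beta>\<in>B. \<theta> \<beta> ` K \<subseteq> K"
    and bpos: "\<forall>\<beta>\<in>B. \<forall>x\<in>K. b \<beta> x > 0"
    and N: "is_norm N" and \<kappa>: "\<kappa> < 1"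
    and contr: "\<forall>\<omega>\<in>words B \<mu>. \<forall>x\<in>K. \<forall>y\<in>K. N (theta_word \<theta> \<omega> x - theta_word \<theta> \<omega> y) \<le> \<kappa> * N (x - y)"
    and vc: "continuous_on K v" and vpos: "\<forall>x\<in>K. v x > 0"
    and veig: "\<forall>x\<in>K. (\<Sum>\<beta>\<in>B. b \<beta> x * v (\<theta> \<beta> x)) = lam * v x"
    and uc: "continuous_on K u" and unn: "\<forall>x\<in>K. u x \<ge> 0" and x0: "x0 \<in> K" "u x0 = 0"
    and ueig: "\<forall>x\<in>K. (\<Sum>\<beta>\<in>B. b \<beta> x * u (\<theta> \<beta> x)) = lam * u x"
  shows "\<forall>x\<in>K. u x = 0"
proof -
  obtain \<beta>0 where \<beta>0: "\<beta>0 \<in> B" using Bne by auto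
  have thx: "\<theta> \<beta> x \<in> K" if "\<beta> \<in> B" "x \<in> K" for \<beta> x using thK that by auto
  have "0 < b \<beta>0 x0 * v (\<theta> \<beta>0 x0)" using \<beta>0 bpos vpos thx x0 by (auto intro!: mult_pos_pos)
  also have "\<dots> \<le> (\<Sum>\<beta>\<in>B. b \<beta> x0 * v (\<theta> \<beta> x0))"
    by (rule member_le_sum[OF \<beta>0 _ fin]) (use bpos vpos thx x0 in \<open>auto intro!: mult_nonneg_nonneg less_imp_le\<close>)
  finally have lam: "lam > 0" using veig vpos x0 by (metis zero_less_mult_pos2)
  define k' where "k' = max \<kappa> 0"
  have k': "0 \<le> k'" "k' < 1" using \<kappa> unfolding k'_def by auto
  have wK: "\<omega> \<in> words B j \<Longrightarrow> x \<in> K \<Longrightarrow> theta_word \<theta> \<omega> x \<in> K" for \<omega> j x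
    using theta_word_K[OF thK] unfolding words_def by auto
  have bwp: "\<omega> \<in> words B j \<Longrightarrow> x \<in> K \<Longrightarrow> bw b \<theta> \<omega> x > 0" for \<omega> j x
    using bw_pos[OF thK bpos] unfolding words_def by auto
  have orb: "u (theta_word \<theta> \<omega> x0) = 0" if "\<omega> \<in> words B j" for \<omega> j
  proof -
    let ?f = "\<lambda>\<omega>. bw b \<theta> \<omega> x0 * u (theta_word \<theta> \<omega> x0)"
    have s0: "sum ?f (words B j) = 0"
      using iterate[OF fin thK ueig x0(1), of j] x0 by simp
    have nn: "\<forall>\<omega>\<in>words B j. bw b \<theta> \<omega> x0 * u (theta_word \<theta> \<omega> x0) \<ge> 0"
    proof
      fix \<omega> assume w: "\<omega> \<in> words B j"
      show "bw b \<theta> \<omega> x0 * u (theta_word \<theta> \<omega> x0) \<ge> 0"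
        using bwp[OF w x0(1)] wK[OF w x0(1)] unn by (meson less_imp_le mult_nonneg_nonneg)
    qed
    have "\<forall>\<omega>\<in>words B j. ?f \<omega> = 0"
      using sum_nonneg_eq_0_iff[OF finite_words[OF fin], of j ?f] nn s0 by blast
    then have "bw b \<theta> \<omega> x0 * u (theta_word \<theta> \<omega> x0) = 0" using that by blast
    then show ?thesis using bwp[OF that x0(1)] by simp
  qed
  obtain c where c: "c > 0" "\<forall>x. norm x \<le> c * N x" using isn_lower[OF N] by blast
  obtain R where R: "\<forall>x\<in>K. norm x \<le> R" using compact_imp_bounded[OF cK] bounded_iff by blast
  define C where "C = (\<Sum>i\<in>UNIV. N (axis i 1))"
  have C: "C \<ge> 0" unfolding C_def using isn_nn[OF N] by (simp add: sum_nonneg)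
  have ND: "N (x - y) \<le> C * (2 * R)" if "x \<in> K" "y \<in> K" for x y
  proof -
    have "norm x \<le> R" "norm y \<le> R" using R that by auto
    then have "norm (x - y) \<le> 2 * R" using norm_triangle_ineq4[of x y] by linarith
    then have "C * norm (x - y) \<le> C * (2 * R)" using C by (rule mult_left_mono)
    moreover have "N (x - y) \<le> C * norm (x - y)" using isn_upper[OF N, of "x - y"] unfolding C_def .
    ultimately show ?thesis by linarith
  qed
  obtain vmin where vmin: "vmin > 0" "\<forall>x\<in>K. vmin \<le> v x"
  proof -
    obtain z where "z \<in> K" "\<forall>y\<in>K. v z \<le> v y" using continuous_attains_inf[OF cK _ vc] x0 by blast
    then show ?thesis using that vpos by blast
  qed
  have ucont: "uniformly_continuous_on K u" using compact_uniformly_continuous[OF uc cK] .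
  show ?thesis
  proof
    fix x assume xK: "x \<in> K"
    have ule: "u x \<le> e * (v x / vmin)" if e: "e > 0" for e
    proof -
      obtain \<delta> where \<delta>: "\<delta> > 0" "\<forall>y\<in>K. \<forall>z\<in>K. dist z y < \<delta> \<longrightarrow> dist (u z) (u y) < e"
        using ucont e unfolding uniformly_continuous_on_def by blast
      have "(\<lambda>k. k' ^ k) \<longlonglongrightarrow> 0" using k' by (intro LIMSEQ_power_zero) simp
      then have lim: "(\<lambda>k. c * (C * (2 * R)) * k' ^ k) \<longlonglongrightarrow> 0"
        by (rule tendsto_mult_right_zero)
      have "eventually (\<lambda>k. c * (C * (2 * R)) * k' ^ k < \<delta>) sequentially"
        using order_tendstoD(2)[OF lim \<delta>(1)] .
      then obtain k where k: "c * (C * (2 * R)) * k' ^ k < \<delta>"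
        unfolding eventually_sequentially by blast
      have small: "u (theta_word \<theta> \<omega> x) < e" if w: "\<omega> \<in> words B (k * \<mu>)" for \<omega>
      proof -
        let ?a = "theta_word \<theta> \<omega> x" and ?b = "theta_word \<theta> \<omega> x0"
        have aK: "?a \<in> K" and bK: "?b \<in> K" using wK[OF w xK] wK[OF w x0(1)] .
        have h1: "N (?a - ?b) \<le> k' ^ k * N (x - x0)"
          using contr_iter[OF N thK contr w xK x0(1)] unfolding k'_def .
        have h2: "k' ^ k * N (x - x0) \<le> k' ^ k * (C * (2 * R))"
          using ND[OF xK x0(1)] k'(1) by (intro mult_left_mono) auto
        have "norm (?a - ?b) \<le> c * N (?a - ?b)" using c(2) by blast
        also have "\<dots> \<le> c * (k' ^ k * (C * (2 * R)))"
          using h1 h2 c(1) by (intro mult_left_mono) auto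
        also have "\<dots> = c * (C * (2 * R)) * k' ^ k" by (simp only: mult_ac)
        also have "\<dots> < \<delta>" using k .
        finally have "dist ?a ?b < \<delta>" unfolding dist_norm .
        then have d: "dist (u ?a) (u ?b) < e"
          by (rule \<delta>(2)[rule_format, OF bK aK])
        have ub: "u ?b = 0" using orb[OF w] .
        have "\<bar>u ?a - u ?b\<bar> < e" using d unfolding dist_real_def .
        then show ?thesis using ub by linarith
      qed
      let ?W = "words B (k * \<mu>)"
      have "lam ^ (k * \<mu>) * u x = (\<Sum>\<omega>\<in>?W. bw b \<theta> \<omega> x * u (theta_word \<theta> \<omega> x))"
        using iterate[OF fin thK ueig xK] .
      also have "\<dots> \<le> (\<Sum>\<omega>\<in>?W. bw b \<theta> \<omega> x * (e * (v (theta_word \<theta> \<omega> x) / vmin)))"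
      proof (rule sum_mono)
        fix \<omega> assume w: "\<omega> \<in> ?W"
        have "u (theta_word \<theta> \<omega> x) \<le> e" using small[OF w] by simp
        also have "\<dots> \<le> e * (v (theta_word \<theta> \<omega> x) / vmin)"
          using vmin wK[OF w xK] e by (simp add: field_simps)
        finally show "bw b \<theta> \<omega> x * u (theta_word \<theta> \<omega> x) \<le> bw b \<theta> \<omega> x * (e * (v (theta_word \<theta> \<omega> x) / vmin))"
          by (rule mult_left_mono) (use bwp[OF w xK] in auto)
      qed
      also have "\<dots> = (e / vmin) * (\<Sum>\<omega>\<in>?W. bw b \<theta> \<omega> x * v (theta_word \<theta> \<omega> x))"
        unfolding sum_distrib_left by (intro sum.cong refl) (simp add: field_simps)
      also have "\<dots> = (e / vmin) * (lam ^ (k * \<mu>) * v x)"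
        using iterate[OF fin thK veig xK] by simp
      also have "\<dots> = lam ^ (k * \<mu>) * (e * (v x / vmin))" by (simp add: field_simps)
      finally have "lam ^ (k * \<mu>) * u x \<le> lam ^ (k * \<mu>) * (e * (v x / vmin))" .
      moreover have "lam ^ (k * \<mu>) > 0" using lam by simp
      ultimately show ?thesis by (metis mult_le_cancel_left_pos)
    qed
    have "u x \<le> 0"
    proof (rule ccontr)
      assume "\<not> u x \<le> 0"
      then have up: "u x > 0" by simp
      have "u x \<le> (u x * vmin / (2 * v x)) * (v x / vmin)"
        using ule[of "u x * vmin / (2 * v x)"] up vmin vpos xK by simp
      also have "\<dots> = u x / 2"
      proof -
        have "v x > 0" using vpos xK by blast
        then show ?thesis using vmin(1) by (simp add: field_simps)
      qed
      finally show False using up by simp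
    qed
    moreover have "u x \<ge> 0" using unn xK by blast
    ultimately show "u x = 0" by linarith
  qed
qed




lemma Cm_cont: "f \<in> Cm m H \<Longrightarrow> continuous_on (closure H) f"
  unfolding Cm_def by blast

lemma vec_cont_from_comp:
  assumes "\<And>i. continuous_on S (\<lambda>x. (f x :: real^'n::finite) $ i)"
  shows "continuous_on S f"
proof -
  have "continuous_on S (\<lambda>x. \<chi> i. f x $ i)" by (intro continuous_on_vec_lambda assms)
  then show ?thesis by simp
qed

lemma pd_const: "\<exists>c'. pd is (\<lambda>_. c) = (\<lambda>_. c')"
proof (induction "is")
  case Nil then show ?case by auto
next
  case (Cons i "is")
  then obtain c' where c': "pd is (\<lambda>_. c) = (\<lambda>_. c')" by blast
  have "frechet_derivative (\<lambda>_. c') (at x) = (\<lambda>_. 0)" for x :: "real^'a"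
    using frechet_derivative_at[OF has_derivative_const[of c' "at x"]] by simp
  then have "pd (i # is) (\<lambda>_. c) = (\<lambda>_. 0)" by (simp add: c')
  then show ?case by blast
qed

lemma const_Cm: "(\<lambda>_. c) \<in> Cm m H"
  unfolding Cm_def
proof (intro CollectI conjI allI impI ballI)
  show "continuous_on (closure H) (\<lambda>_. c)" by simp
next
  fix "is" :: "'a list" and x
  obtain c' where c': "pd is (\<lambda>_. c) = (\<lambda>_. c')" using pd_const by blast
  show "pd is (\<lambda>_. c) differentiable at x" unfolding c' by simp
next
  fix "is" :: "'a list"
  obtain c' where c': "pd is (\<lambda>_. c) = (\<lambda>_. c')" using pd_const by blast
  show "\<exists>F. continuous_on (closure H) F \<and> (\<forall>x\<in>H. F x = pd is (\<lambda>_. c) x)"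
    unfolding c' by (intro exI[of _ "\<lambda>_. c'"]) simp
qed

lemma theta_word_cont:
  assumes "\<forall>\<beta>\<in>B. continuous_on K (\<theta> \<beta>)" "\<forall>\<beta>\<in>B. \<theta> \<beta> ` K \<subseteq> K"
  shows "set \<omega> \<subseteq> B \<Longrightarrow> continuous_on K (theta_word \<theta> \<omega>)"
proof (induction \<omega>)
  case Nil then show ?case by (simp add: continuous_on_id)
next
  case (Cons j js)
  then have "continuous_on K (\<theta> j)" "\<theta> j ` K \<subseteq> K" "continuous_on K (theta_word \<theta> js)"
    using assms by auto
  then have "continuous_on K (\<lambda>x. theta_word \<theta> js (\<theta> j x))"
    by (intro continuous_on_compose2[of K "theta_word \<theta> js" K "\<theta> j"]) auto
  then show ?case by (simp add: comp_def)
qed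

lemma contr_closure:
  fixes H :: "(real^'n::finite) set"
  assumes N: "is_norm N" and g: "continuous_on (closure H) g" "g ` closure H \<subseteq> closure H"
    and c: "\<forall>x\<in>H. \<forall>y\<in>H. N (g x - g y) \<le> \<kappa> * N (x - y)"
    and xy: "x \<in> closure H" "y \<in> closure H"
  shows "N (g x - g y) \<le> \<kappa> * N (x - y)"
proof -
  let ?f = "\<lambda>p. \<kappa> * N (fst p - snd p) - N (g (fst p) - g (snd p))"
  have Nc: "continuous_on UNIV N" by (rule isn_cont[OF N])
  have c1: "continuous_on (closure H \<times> closure H) (\<lambda>p. N (fst p - snd p))"
    by (rule continuous_on_compose2[OF Nc]) (auto intro!: continuous_intros)
  have gf: "continuous_on (closure H \<times> closure H) (\<lambda>p. g (fst p))"
    by (rule continuous_on_compose2[OF g(1)]) (auto intro!: continuous_intros)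
  have gs: "continuous_on (closure H \<times> closure H) (\<lambda>p. g (snd p))"
    by (rule continuous_on_compose2[OF g(1)]) (auto intro!: continuous_intros)
  have c2: "continuous_on (closure H \<times> closure H) (\<lambda>p. N (g (fst p) - g (snd p)))"
    by (rule continuous_on_compose2[OF Nc]) (auto intro!: continuous_intros gf gs)
  have "continuous_on (closure (H \<times> H)) ?f" unfolding closure_Times
    by (intro continuous_intros c1 c2)
  moreover have "(x, y) \<in> closure (H \<times> H)" using xy by (simp add: closure_Times)
  moreover have "\<And>p. p \<in> H \<times> H \<Longrightarrow> ?f p \<ge> 0" using c by auto
  ultimately have "?f (x, y) \<ge> 0" by (rule continuous_ge_on_closure)
  then show ?thesis by simp
qed




theorem corollary5p6:
  fixes H :: "(real^'n::finite) set" and B :: "'b set" and m :: nat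
    and b :: "'b \<Rightarrow> real^'n \<Rightarrow> real" and \<theta> :: "'b \<Rightarrow> real^'n \<Rightarrow> real^'n"
    and v :: "real^'n \<Rightarrow> real" and \<pi> :: "real^'n \<Rightarrow> real^'n" and bar :: "'b \<Rightarrow> 'b"
  assumes setting: "(settingA m H B b \<theta> \<and> unique_pos_eigvec H (Cm m H) B b \<theta> v) \<or>
                    (settingB H B b \<theta> \<and> unique_pos_eigvec H (C0 H) B b \<theta> v)"
    and m: "m \<ge> 1"
    and pi_maps: "\<pi> ` closure H \<subseteq> closure H"
    and pi_Cm: "\<forall>i. (\<lambda>x. \<pi> x $ i) \<in> Cm m H"
    and pi_inv: "\<forall>x\<in>closure H. \<pi> (\<pi> x) = x"
    and bar_bij: "bij_betw bar B B"
    and theta_sym: "\<forall>\<beta>\<in>B. \<forall>x\<in>closure H. \<pi> (\<theta> (bar \<beta>) x) = \<theta> \<beta> (\<pi> x)"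
    and b_sym: "\<forall>\<beta>\<in>B. \<forall>x\<in>closure H. b \<beta> (\<pi> x) = b (bar \<beta>) x"
  shows "\<forall>x\<in>closure H. v (\<pi> x) = v x"
proof -
  let ?K = "closure H"
  define w where "w = (\<lambda>x. v (\<pi> x))"
  have piK: "\<pi> x \<in> ?K" if "x \<in> ?K" for x using pi_maps that by blast
  have picont: "continuous_on ?K \<pi>"
    by (rule vec_cont_from_comp) (use pi_Cm Cm_cont in blast)
  have pev: "pos_eigvec H (Cm m H) B b \<theta> v \<or> pos_eigvec H (C0 H) B b \<theta> v"
    using setting unfolding unique_pos_eigvec_def by blast
  have vc: "continuous_on ?K v"
    using pev unfolding pos_eigvec_def C0_def by (auto dest: Cm_cont)
  have vpos: "\<forall>x\<in>?K. v x > 0" using pev unfolding pos_eigvec_def by blast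
  obtain ev where ev: "\<forall>x\<in>?K. Lam B b \<theta> v x = ev * v x" using pev unfolding pos_eigvec_def by blast
  have wc: "continuous_on ?K w" unfolding w_def
    by (rule continuous_on_compose2[OF vc picont]) (use piK in blast)
  have wpos: "\<forall>x\<in>?K. w x > 0" unfolding w_def using vpos piK by blast
  have weig: "\<forall>x\<in>?K. Lam B b \<theta> w x = ev * w x"
  proof
    fix x assume xK: "x \<in> ?K"
    have inj: "inj_on bar B" and img: "bar ` B = B" using bar_bij unfolding bij_betw_def by auto
    have "Lam B b \<theta> w x = infsum (\<lambda>\<beta>. b \<beta> x * v (\<pi> (\<theta> \<beta> x))) (bar ` B)"
      unfolding Lam_def w_def img ..
    also have "\<dots> = infsum ((\<lambda>\<beta>. b \<beta> x * v (\<pi> (\<theta> \<beta> x))) \<circ> bar) B"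
      by (rule infsum_reindex[OF inj])
    also have "\<dots> = infsum (\<lambda>\<beta>. b \<beta> (\<pi> x) * v (\<theta> \<beta> (\<pi> x))) B"
    proof (rule infsum_cong)
      fix \<beta> assume "\<beta> \<in> B"
      then show "((\<lambda>\<beta>. b \<beta> x * v (\<pi> (\<theta> \<beta> x))) \<circ> bar) \<beta> = b \<beta> (\<pi> x) * v (\<theta> \<beta> (\<pi> x))"
        using theta_sym b_sym xK by simp
    qed
    also have "\<dots> = Lam B b \<theta> v (\<pi> x)" unfolding Lam_def ..
    also have "\<dots> = ev * w x" using ev piK[OF xK] unfolding w_def by blast
    finally show "Lam B b \<theta> w x = ev * w x" .
  qed
  have key: "\<exists>c>0. \<forall>x\<in>?K. w x = c * v x"
  proof (cases "settingB H B b \<theta> \<and> unique_pos_eigvec H (C0 H) B b \<theta> v")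
    case True
    have "pos_eigvec H (C0 H) B b \<theta> w"
      unfolding pos_eigvec_def C0_def using wc wpos weig by blast
    then show ?thesis using True unfolding unique_pos_eigvec_def by blast
  next
    case False
    then have A: "settingA m H B b \<theta>" and U: "unique_pos_eigvec H (Cm m H) B b \<theta> v" using setting by auto
    show ?thesis
    proof (cases "B = {}")
      case True
      have "pos_eigvec H (Cm m H) B b \<theta> (\<lambda>_. 1)"
        unfolding pos_eigvec_def using True const_Cm by (auto simp: Lam_def)
      then obtain c where c: "c > 0" "\<forall>x\<in>?K. 1 = c * v x" using U unfolding unique_pos_eigvec_def by blast
      have "w x = 1 * v x" if "x \<in> ?K" for x
      proof -
        have "c * w x = c * v x" using c(2) that piK[OF that] unfolding w_def by metis
        then show ?thesis using c(1) by simp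
      qed
      then show ?thesis by (intro exI[of _ 1]) auto
    next
      case Bne: False
      show ?thesis
      proof (cases "?K = {}")
        case True then show ?thesis by (intro exI[of _ 1]) auto
      next
        case Kne: False
        have fin: "finite B" and bH: "bounded H" using A unfolding settingA_def by auto
        have cK: "compact ?K" using bH by (simp add: compact_closure)
        have bpos: "\<forall>\<beta>\<in>B. \<forall>x\<in>?K. b \<beta> x > 0" using A unfolding settingA_def by blast
        have thc: "\<forall>\<beta>\<in>B. continuous_on ?K (\<theta> \<beta>)"
        proof
          fix \<beta> assume "\<beta> \<in> B"
          then have "\<forall>i. (\<lambda>x. \<theta> \<beta> x $ i) \<in> Cm m H" using A unfolding settingA_def by blast
          then show "continuous_on ?K (\<theta> \<beta>)" by (intro vec_cont_from_comp) (use Cm_cont in blast)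
        qed
        have thK: "\<forall>\<beta>\<in>B. \<theta> \<beta> ` ?K \<subseteq> ?K"
        proof
          fix \<beta> assume bB: "\<beta> \<in> B"
          then have "\<theta> \<beta> ` H \<subseteq> H" using A unfolding settingA_def by blast
          then have "\<theta> \<beta> ` H \<subseteq> ?K" using closure_subset by blast
          then show "\<theta> \<beta> ` ?K \<subseteq> ?K" using image_closure_subset[OF thc[rule_format, OF bB]] by blast
        qed
        obtain N \<mu> \<kappa> where N: "is_norm N" and \<kappa>: "\<kappa> < 1"
          and contrH: "\<forall>\<omega>\<in>words B \<mu>. \<forall>x\<in>H. \<forall>y\<in>H.
           N (theta_word \<theta> \<omega> x - theta_word \<theta> \<omega> y) \<le> \<kappa> * N (x - y)"
          using A unfolding settingA_def by blast
        have contr: "\<forall>\<omega>\<in>words B \<mu>. \<forall>x\<in>?K. \<forall>y\<in>?K.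
           N (theta_word \<theta> \<omega> x - theta_word \<theta> \<omega> y) \<le> \<kappa> * N (x - y)"
        proof (intro ballI)
          fix \<omega> x y assume w: "\<omega> \<in> words B \<mu>" and x: "x \<in> ?K" and y: "y \<in> ?K"
          have sw: "set \<omega> \<subseteq> B" using w unfolding words_def by blast
          show "N (theta_word \<theta> \<omega> x - theta_word \<theta> \<omega> y) \<le> \<kappa> * N (x - y)"
          proof (rule contr_closure[OF N])
            show "continuous_on ?K (theta_word \<theta> \<omega>)" by (rule theta_word_cont[OF thc thK sw])
            show "theta_word \<theta> \<omega> ` ?K \<subseteq> ?K" using theta_word_K[OF thK sw] by blast
            show "\<forall>x\<in>H. \<forall>y\<in>H. N (theta_word \<theta> \<omega> x - theta_word \<theta> \<omega> y) \<le> \<kappa> * N (x - y)"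
              using contrH w by blast
          qed (use x y in auto)
        qed
        have veig: "\<forall>x\<in>?K. (\<Sum>\<beta>\<in>B. b \<beta> x * v (\<theta> \<beta> x)) = ev * v x"
          using ev fin unfolding Lam_def by simp
        have weig': "\<forall>x\<in>?K. (\<Sum>\<beta>\<in>B. b \<beta> x * w (\<theta> \<beta> x)) = ev * w x"
          using weig fin unfolding Lam_def by simp
        have vne: "\<forall>x\<in>?K. v x \<noteq> 0" using vpos by auto
        have rc: "continuous_on ?K (\<lambda>x. w x / v x)"
          by (intro continuous_intros wc vc) (use vne in blast)
        obtain z where z: "z \<in> ?K" "\<forall>y\<in>?K. w y / v y \<le> w z / v z"
          using continuous_attains_sup[OF cK Kne rc] by blast
        define c where "c = w z / v z"
        have cpos: "c > 0" unfolding c_def using wpos vpos z(1) by simp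
        define u where "u = (\<lambda>x. c * v x - w x)"
        have uc: "continuous_on ?K u" unfolding u_def by (intro continuous_intros vc wc)
        have unn: "\<forall>x\<in>?K. u x \<ge> 0"
        proof
          fix x assume xK: "x \<in> ?K"
          have "w x / v x \<le> c" using z(2) xK unfolding c_def by blast
          then show "u x \<ge> 0" unfolding u_def using vpos xK by (simp add: divide_le_eq)
        qed
        have uz: "u z = 0"
        proof -
          have "v z > 0" using vpos z(1) by blast
          then show ?thesis unfolding u_def c_def by simp
        qed
        have ueig: "\<forall>x\<in>?K. (\<Sum>\<beta>\<in>B. b \<beta> x * u (\<theta> \<beta> x)) = ev * u x"
        proof
          fix x assume xK: "x \<in> ?K"
          have "(\<Sum>\<beta>\<in>B. b \<beta> x * u (\<theta> \<beta> x))
              = c * (\<Sum>\<beta>\<in>B. b \<beta> x * v (\<theta> \<beta> x)) - (\<Sum>\<beta>\<in>B. b \<beta> x * w (\<theta> \<beta> x))"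
            unfolding u_def by (simp add: sum_distrib_left sum_subtractf right_diff_distrib mult.left_commute)
          also have "\<dots> = c * (ev * v x) - ev * w x" using veig weig' xK by simp
          also have "\<dots> = ev * u x" unfolding u_def by (simp add: algebra_simps)
          finally show "(\<Sum>\<beta>\<in>B. b \<beta> x * u (\<theta> \<beta> x)) = ev * u x" .
        qed
        have "\<forall>x\<in>?K. u x = 0"
          by (rule core[OF fin Bne cK thK bpos N \<kappa> contr vc vpos veig uc unn z(1) uz ueig])
        then have "\<forall>x\<in>?K. w x = c * v x" unfolding u_def by auto
        then show ?thesis using cpos by blast
      qed
    qed
  qed
  then obtain c where c: "c > 0" "\<forall>x\<in>?K. w x = c * v x" by blast
  show ?thesis
  proof
    fix x assume xK: "x \<in> ?K"
    have "v x = w (\<pi> x)" unfolding w_def using pi_inv xK by simp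
    also have "\<dots> = c * v (\<pi> x)" using c(2) piK[OF xK] by blast
    also have "\<dots> = c * (c * v x)" using c(2) xK unfolding w_def by simp
    finally have "1 * v x = (c * c) * v x" by simp
    then have "(c * c - 1) * v x = 0" by (simp add: algebra_simps)
    moreover have "v x \<noteq> 0" using vpos xK by auto
    ultimately have "c * c - 1 = 0" by simp
    then have "(c - 1) * (c + 1) = 0" by (simp add: algebra_simps)
    moreover have "c + 1 \<noteq> 0" using c(1) by simp
    ultimately have "c = 1" by simp
    then show "v (\<pi> x) = v x" using c(2) xK unfolding w_def by simp
  qed
qed


end
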